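(* Let $\mathbb{F}$ be a field, $n\ge1$, and $d=pq$ with integers $p,q\ge1$. For every $n^{d}\times n^{d}$ matrix $M$, $\mathrm{PT\text{-}rank}_{[n]^{pq}}(M)\le\mathrm{PT\text{-}rank}_{[n^p]^q}(M)$.
   Context: $\mathrm{PT\text{-}rank}_{[n]^{pq}}(M)$ is the PT-rank of $M$ viewed as an $n^{pq}\times n^{pq}$ matrix with rows/columns indexed by $[n]^{pq}$; $\mathrm{PT\text{-}rank}_{[n^p]^q}(M)$ is the PT-rank of the same matrix viewed as an $(n^p)^q\times(n^p)^q$ matrix, where each of the $q$ coordinates in $[n^p]$ encodes a consecutive block of $p$ coordinates in $[n]$ (coordinates $(l-1)p+1,\dots,lp$ for the $l$-th). For a matrix indexed by $[N]^m$: $M^{\top_k}$ ($k\in[m]$) swaps the $k$-th row index with the $k$-th column index, $M^{\top_\kappa}$ composes these over $k\in\kappa\subseteq[m]$, $M$ is PT-basic if $\mathrm{rank}(M^{\top_\kappa})=1$ for some $\kappa$, and the PT-rank is the least number of PT-basic matrices summing to $M$. *)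

theory Defs
  imports Main
begin

text \<open>Index set [N]^m, with [N] = {0..<N} (0-based), multi-indices as lists of length m.\<close>
definition idx :: "nat \<Rightarrow> nat \<Rightarrow> nat list set" where
  "idx N m = {xs. length xs = m \<and> (\<forall>x\<in>set xs. x < N)}"

text \<open>Matrices indexed by [N]^m x [N]^m: functions on multi-indices (only values on idx N m matter).\<close>
type_synonym 'a pmat = "nat list \<Rightarrow> nat list \<Rightarrow> 'a"

definition mix :: "nat set \<Rightarrow> nat list \<Rightarrow> nat list \<Rightarrow> nat list" where
  "mix \<kappa> x y = map (\<lambda>k. if k \<in> \<kappa> then y ! k else x ! k) [0..<length x]"

text \<open>Partial transpose M^{T_kappa}: swap the k-th row index with the k-th column index for k in kappa.\<close>
definition ptrans :: "nat set \<Rightarrow> 'a pmat \<Rightarrow> 'a pmat" where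
  "ptrans \<kappa> M = (\<lambda>x y. M (mix \<kappa> x y) (mix \<kappa> y x))"

definition rank_one_on :: "nat list set \<Rightarrow> ('a::field) pmat \<Rightarrow> bool" where
  "rank_one_on I M \<longleftrightarrow> (\<exists>x\<in>I. \<exists>y\<in>I. M x y \<noteq> 0) \<and>
     (\<exists>u v. \<forall>x\<in>I. \<forall>y\<in>I. M x y = u x * v y)"

definition pt_basic :: "nat \<Rightarrow> nat \<Rightarrow> ('a::field) pmat \<Rightarrow> bool" where
  "pt_basic N m M \<longleftrightarrow> (\<exists>\<kappa> \<subseteq> {0..<m}. rank_one_on (idx N m) (ptrans \<kappa> M))"

definition pt_rank :: "nat \<Rightarrow> nat \<Rightarrow> ('a::field) pmat \<Rightarrow> nat" where
  "pt_rank N m M = (LEAST r. \<exists>B. (\<forall>i<r. pt_basic N m (B i)) \<and>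
      (\<forall>x\<in>idx N m. \<forall>y\<in>idx N m. M x y = (\<Sum>i<r. B i x y)))"

text \<open>Decode a multi-index in [n^p]^q into one in [n]^{pq}: the l-th coordinate a in [n^p]
  is expanded (base-n digits, least significant first) into the coordinates lp,...,lp+p-1.\<close>
definition ungroup :: "nat \<Rightarrow> nat \<Rightarrow> nat list \<Rightarrow> nat list" where
  "ungroup n p X = concat (map (\<lambda>a. map (\<lambda>j. a div n ^ j mod n) [0..<p]) X)"

text \<open>The same matrix M on [n]^{pq} viewed as a matrix on [n^p]^q.\<close>
definition regroup :: "nat \<Rightarrow> nat \<Rightarrow> 'a pmat \<Rightarrow> 'a pmat" where
  "regroup n p M = (\<lambda>X Y. M (ungroup n p X) (ungroup n p Y))"

end

theory Submission
  imports Defs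
begin

lemma mix_length[simp]: "length (mix \<kappa> x y) = length x"
  by (simp add: mix_def)

lemma mix_nth[simp]: "k < length x \<Longrightarrow> mix \<kappa> x y ! k = (if k \<in> \<kappa> then y ! k else x ! k)"
  by (simp add: mix_def)

lemma mix_empty: "mix {} x y = x"
  by (rule nth_equalityI) auto

lemma finite_idx: "finite (idx N m)"
proof -
  have "idx N m = {xs. set xs \<subseteq> {0..<N} \<and> length xs = m}"
    by (auto simp: idx_def)
  then show ?thesis using finite_lists_length_eq[of "{0..<N}" m] by simp
qed

lemma elem_basic:
  fixes c :: "'a::field"
  assumes "a \<in> idx N m" "b \<in> idx N m" "c \<noteq> 0"
  shows "pt_basic N m (\<lambda>x y. if x = a \<and> y = b then c else 0)"
proof -
  have "rank_one_on (idx N m) (ptrans {} (\<lambda>x y. if x = a \<and> y = b then c else 0))"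
    unfolding rank_one_on_def ptrans_def mix_empty
    apply (rule conjI)
    using assms apply force
    apply (rule exI[of _ "\<lambda>x. if x = a then c else 0"])
    apply (rule exI[of _ "\<lambda>y. if y = b then 1 else 0"])
    by auto
  then show ?thesis unfolding pt_basic_def by blast
qed

lemma decomp_exists_aux:
  fixes M :: "('a::field) pmat"
  assumes "finite S"
  shows "\<exists>(r::nat) B. (\<forall>i<r. pt_basic N m (B i)) \<and>
      (\<forall>x\<in>idx N m. \<forall>y\<in>idx N m. (if (x,y) \<in> S then M x y else 0) = (\<Sum>i<r. B i x y))"
  using assms
proof (induction S rule: finite_induct)
  case empty
  have "\<forall>i<(0::nat). pt_basic N m ((\<lambda>i x y. 0::'a) i)" by simp
  then show ?case by force
next
  case (insert a S)
  obtain r :: nat and B where rB: "\<forall>i<r. pt_basic N m (B i)"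
    "\<forall>x\<in>idx N m. \<forall>y\<in>idx N m. (if (x,y) \<in> S then M x y else 0) = (\<Sum>i<r. B i x y)"
    using insert.IH by blast
  obtain a1 a2 where a: "a = (a1, a2)" by (cases a)
  show ?case
  proof (cases "a1 \<in> idx N m \<and> a2 \<in> idx N m \<and> M a1 a2 \<noteq> 0")
    case True
    define E where "E = (\<lambda>x y. if x = a1 \<and> y = a2 then M a1 a2 else 0)"
    have E: "pt_basic N m E" unfolding E_def using True elem_basic by blast
    have "(if (x,y) \<in> insert a S then M x y else 0) = (\<Sum>i<Suc r. (B(r := E)) i x y)"
      if xy: "x \<in> idx N m" "y \<in> idx N m" for x y
    proof -
      have "(\<Sum>i<Suc r. (B(r := E)) i x y) = (\<Sum>i<r. B i x y) + E x y"
        by (simp add: sum.lessThan_Suc)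
      also have "\<dots> = (if (x,y) \<in> S then M x y else 0) + E x y"
        using rB(2) xy by simp
      finally show ?thesis using insert.hyps(2) a by (auto simp: E_def)
    qed
    moreover have "\<forall>i<Suc r. pt_basic N m ((B(r := E)) i)" using rB(1) E by auto
    ultimately show ?thesis by blast
  next
    case False
    have "(if (x,y) \<in> insert a S then M x y else 0) = (\<Sum>i<r. B i x y)"
      if xy: "x \<in> idx N m" "y \<in> idx N m" for x y
    proof -
      have "(\<Sum>i<r. B i x y) = (if (x,y) \<in> S then M x y else 0)"
        using rB(2) xy by simp
      then show ?thesis using insert.hyps(2) a False xy by auto
    qed
    then show ?thesis using rB(1) by blast
  qed
qed

lemma decomp_exists:
  fixes M :: "('a::field) pmat"
  shows "\<exists>(r::nat) B. (\<forall>i<r. pt_basic N m (B i)) \<and>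
      (\<forall>x\<in>idx N m. \<forall>y\<in>idx N m. M x y = (\<Sum>i<r. B i x y))"
  using decomp_exists_aux[of "idx N m \<times> idx N m" N m M] finite_idx by auto

definition dval :: "nat \<Rightarrow> nat \<Rightarrow> (nat \<Rightarrow> nat) \<Rightarrow> nat" where
  "dval n p d = (\<Sum>j<p. d j * n ^ j)"

lemma dval_Suc: "dval n (Suc p) d = d 0 + n * dval n p (\<lambda>j. d (Suc j))"
  unfolding dval_def sum.lessThan_Suc_shift
  by (simp add: sum_distrib_left mult.assoc mult.left_commute)

lemma dval_digit:
  assumes "\<forall>j<p. d j < n" "i < p"
  shows "dval n p d div n ^ i mod n = d i"
  using assms
proof (induction p arbitrary: d i)
  case 0
  then show ?case by simp
next
  case (Suc p)
  show ?case
  proof (cases i)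
    case 0
    then show ?thesis using Suc.prems by (simp add: dval_Suc)
  next
    case (Suc i')
    have n0: "n > 0" using Suc.prems by auto
    have "dval n (Suc p) d div n ^ i = (d 0 + n * dval n p (\<lambda>j. d (Suc j))) div n div n ^ i'"
      by (simp add: dval_Suc Suc div_mult2_eq)
    also have "(d 0 + n * dval n p (\<lambda>j. d (Suc j))) div n = dval n p (\<lambda>j. d (Suc j))"
      using n0 Suc.prems by simp
    finally show ?thesis using Suc.IH[of "\<lambda>j. d (Suc j)" i'] Suc.prems \<open>i = Suc i'\<close> by auto
  qed
qed

lemma dval_bound:
  assumes "\<forall>j<p. d j < n"
  shows "dval n p d < n ^ p"
  using assms
proof (induction p arbitrary: d)
  case 0
  then show ?case by (simp add: dval_def)
next
  case (Suc p)
  have h: "dval n p (\<lambda>j. d (Suc j)) < n ^ p" using Suc by auto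
  have "d 0 < n" using Suc.prems by auto
  have "n * (dval n p (\<lambda>j. d (Suc j)) + 1) \<le> n * n ^ p"
    using h by (intro mult_le_mono2) simp
  then show ?case using \<open>d 0 < n\<close> by (simp add: dval_Suc)
qed

lemma dval_digits:
  assumes "a < n ^ p"
  shows "dval n p (\<lambda>j. a div n ^ j mod n) = a"
  using assms
proof (induction p arbitrary: a)
  case 0
  then show ?case by (simp add: dval_def)
next
  case (Suc p)
  have n0: "n > 0" using Suc.prems by (cases "n = 0") auto
  have "a div n < n ^ p" using Suc.prems n0
    by (simp add: div_less_iff_less_mult mult.commute)
  then have "dval n p (\<lambda>j. a div n div n ^ j mod n) = a div n" using Suc.IH by blast
  moreover have "(\<lambda>j. a div n ^ Suc j mod n) = (\<lambda>j. a div n div n ^ j mod n)"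
    by (simp add: div_mult2_eq)
  ultimately show ?case by (simp add: dval_Suc)
qed

lemma length_ungroup[simp]: "length (ungroup n p X) = length X * p"
  by (induction X) (auto simp: ungroup_def)

lemma nth_ungroup:
  assumes "p \<ge> 1" "k < length X * p"
  shows "ungroup n p X ! k = X ! (k div p) div n ^ (k mod p) mod n"
  using assms
proof (induction X arbitrary: k)
  case Nil
  then show ?case by simp
next
  case (Cons a X)
  have eq: "ungroup n p (a # X) = map (\<lambda>j. a div n ^ j mod n) [0..<p] @ ungroup n p X"
    by (simp add: ungroup_def)
  show ?case
  proof (cases "k < p")
    case True
    then show ?thesis unfolding eq by (simp add: nth_append)
  next
    case False
    have k1: "k div p = Suc ((k - p) div p)" using False Cons.prems by (simp add: le_div_geq)
    have k2: "k mod p = (k - p) mod p" using False by (simp add: le_mod_geq)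
    have "k - p < length X * p" using Cons.prems False by auto
    then show ?thesis unfolding eq using False Cons.IH[of "k - p"] Cons.prems k1 k2
      by (simp add: nth_append)
  qed
qed

definition grp :: "nat \<Rightarrow> nat \<Rightarrow> nat list \<Rightarrow> nat list" where
  "grp n p x = map (\<lambda>l. dval n p (\<lambda>j. x ! (l * p + j))) [0..<length x div p]"

lemma idx_lt: "(l::nat) < q \<Longrightarrow> j < p \<Longrightarrow> l * p + j < p * q"
proof -
  assume "l < q" "j < p"
  then have "l * p + j < (l + 1) * p" by simp
  also have "\<dots> \<le> q * p" using \<open>l < q\<close> by (intro mult_le_mono1) simp
  finally show ?thesis by (simp add: mult.commute)
qed

lemma idx_nth: "x \<in> idx N m \<Longrightarrow> k < m \<Longrightarrow> x ! k < N"
  by (auto simp: idx_def)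

lemma grp_idx:
  assumes "p \<ge> 1" "x \<in> idx n (p * q)"
  shows "grp n p x \<in> idx (n ^ p) q"
proof -
  have len: "length x = p * q" using assms by (simp add: idx_def)
  have "\<forall>l<q. dval n p (\<lambda>j. x ! (l * p + j)) < n ^ p"
  proof (intro allI impI)
    fix l assume l: "l < q"
    show "dval n p (\<lambda>j. x ! (l * p + j)) < n ^ p"
      by (rule dval_bound) (use idx_nth[OF assms(2) idx_lt[OF l]] in blast)
  qed
  then show ?thesis using len assms(1) by (auto simp: idx_def grp_def)
qed

lemma ungroup_grp:
  assumes "p \<ge> 1" "x \<in> idx n (p * q)"
  shows "ungroup n p (grp n p x) = x"
proof -
  have len: "length x = p * q" using assms by (simp add: idx_def)
  show ?thesis
  proof (rule nth_equalityI)
    show "length (ungroup n p (grp n p x)) = length x" using len assms(1) by (simp add: grp_def)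
  next
    fix k assume "k < length (ungroup n p (grp n p x))"
    then have k: "k < q * p" using len assms(1) by (simp add: grp_def)
    have p0: "p > 0" using assms(1) by simp
    have kq: "k div p < q" using k div_less_iff_less_mult[OF p0, of k q] by blast
    have km: "k mod p < p" using assms(1) by simp
    have "ungroup n p (grp n p x) ! k = grp n p x ! (k div p) div n ^ (k mod p) mod n"
      using nth_ungroup[OF assms(1)] k len assms(1) by (simp add: grp_def)
    also have "\<dots> = dval n p (\<lambda>j. x ! (k div p * p + j)) div n ^ (k mod p) mod n"
      using kq len assms(1) by (simp add: grp_def)
    also have "\<dots> = x ! (k div p * p + k mod p)"
    proof -
      have "\<forall>j<p. x ! (k div p * p + j) < n"
        using idx_nth[OF assms(2) idx_lt[OF kq]] by blast
      from dval_digit[OF this km] show ?thesis .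
    qed
    also have "\<dots> = x ! k" by simp
    finally show "ungroup n p (grp n p x) ! k = x ! k" .
  qed
qed

lemma grp_ungroup:
  assumes "p \<ge> 1" "X \<in> idx (n ^ p) q"
  shows "grp n p (ungroup n p X) = X"
proof -
  have len: "length X = q" using assms by (simp add: idx_def)
  show ?thesis
  proof (rule nth_equalityI)
    show "length (grp n p (ungroup n p X)) = length X" using assms(1) by (simp add: grp_def)
  next
    fix l assume "l < length (grp n p (ungroup n p X))"
    then have l: "l < q" using len assms(1) by (simp add: grp_def)
    have "grp n p (ungroup n p X) ! l = dval n p (\<lambda>j. ungroup n p X ! (l * p + j))"
      using l len assms(1) by (simp add: grp_def)
    also have "\<dots> = dval n p (\<lambda>j. X ! l div n ^ j mod n)"
      unfolding dval_def
    proof (rule sum.cong)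
      fix j assume "j \<in> {..<p}"
      then have j: "j < p" by simp
      have "l * p + j < q * p" using idx_lt[OF l j] by (simp add: mult.commute)
      then show "ungroup n p X ! (l * p + j) * n ^ j = X ! l div n ^ j mod n * n ^ j"
        using nth_ungroup[OF assms(1)] len j by simp
    qed simp
    also have "\<dots> = X ! l" using dval_digits idx_nth[OF assms(2) l] by blast
    finally show "grp n p (ungroup n p X) ! l = X ! l" .
  qed
qed

lemma ungroup_idx:
  assumes "p \<ge> 1" "n \<ge> 1" "X \<in> idx (n ^ p) q"
  shows "ungroup n p X \<in> idx n (p * q)"
proof -
  have len: "length X = q" using assms by (simp add: idx_def)
  have "\<forall>k < length (ungroup n p X). ungroup n p X ! k < n"
    using nth_ungroup[OF assms(1)] assms(2) by simp
  then show ?thesis using len by (auto simp: idx_def in_set_conv_nth mult.commute)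
qed

lemma grp_mix:
  assumes "p \<ge> 1" "x \<in> idx n (p * q)" "y \<in> idx n (p * q)"
  shows "grp n p (mix {k. k < p * q \<and> k div p \<in> \<kappa>} x y) = mix \<kappa> (grp n p x) (grp n p y)"
proof -
  have lx: "length x = p * q" and ly: "length y = p * q" using assms by (auto simp: idx_def)
  show ?thesis
  proof (rule nth_equalityI)
    show "length (grp n p (mix {k. k < p * q \<and> k div p \<in> \<kappa>} x y)) = length (mix \<kappa> (grp n p x) (grp n p y))"
      by (simp add: grp_def)
  next
    fix l assume "l < length (grp n p (mix {k. k < p * q \<and> k div p \<in> \<kappa>} x y))"
    then have l: "l < q" using lx assms(1) by (simp add: grp_def)
    have "grp n p (mix {k. k < p * q \<and> k div p \<in> \<kappa>} x y) ! l
        = dval n p (\<lambda>j. mix {k. k < p * q \<and> k div p \<in> \<kappa>} x y ! (l * p + j))"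
      using l lx assms(1) by (simp add: grp_def)
    also have "\<dots> = dval n p (\<lambda>j. (if l \<in> \<kappa> then y else x) ! (l * p + j))"
      unfolding dval_def
    proof (rule sum.cong)
      fix j assume "j \<in> {..<p}"
      then have j: "j < p" by simp
      have "(l * p + j) div p = l" using j by simp
      then show "mix {k. k < p * q \<and> k div p \<in> \<kappa>} x y ! (l * p + j) * n ^ j =
          (if l \<in> \<kappa> then y else x) ! (l * p + j) * n ^ j"
        using idx_lt[OF l j] lx by simp
    qed simp
    also have "\<dots> = mix \<kappa> (grp n p x) (grp n p y) ! l"
      using l lx ly assms(1) by (simp add: grp_def)
    finally show "grp n p (mix {k. k < p * q \<and> k div p \<in> \<kappa>} x y) ! l = mix \<kappa> (grp n p x) (grp n p y) ! l" .
  qed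
qed

lemma basic_transfer:
  fixes B :: "('a::field) pmat"
  assumes "p \<ge> 1" "n \<ge> 1" "pt_basic (n ^ p) q B"
  shows "pt_basic n (p * q) (\<lambda>x y. B (grp n p x) (grp n p y))"
proof -
  obtain \<kappa> where k: "\<kappa> \<subseteq> {0..<q}" and r1: "rank_one_on (idx (n ^ p) q) (ptrans \<kappa> B)"
    using assms(3) unfolding pt_basic_def by blast
  define \<kappa>' where "\<kappa>' = {k. k < p * q \<and> k div p \<in> \<kappa>}"
  have k': "\<kappa>' \<subseteq> {0..<p*q}" by (auto simp: \<kappa>'_def)
  have pt: "ptrans \<kappa>' (\<lambda>x y. B (grp n p x) (grp n p y)) x y = ptrans \<kappa> B (grp n p x) (grp n p y)"
    if "x \<in> idx n (p * q)" "y \<in> idx n (p * q)" for x y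
    using grp_mix[OF assms(1) that] grp_mix[OF assms(1) that(2,1)]
    by (simp add: ptrans_def \<kappa>'_def)
  obtain X Y where XY: "X \<in> idx (n ^ p) q" "Y \<in> idx (n ^ p) q" "ptrans \<kappa> B X Y \<noteq> 0"
    using r1 unfolding rank_one_on_def by blast
  obtain u v where uv: "\<forall>x\<in>idx (n ^ p) q. \<forall>y\<in>idx (n ^ p) q. ptrans \<kappa> B x y = u x * v y"
    using r1 unfolding rank_one_on_def by blast
  have "rank_one_on (idx n (p * q)) (ptrans \<kappa>' (\<lambda>x y. B (grp n p x) (grp n p y)))"
    unfolding rank_one_on_def
  proof (intro conjI)
    show "\<exists>x\<in>idx n (p * q). \<exists>y\<in>idx n (p * q). ptrans \<kappa>' (\<lambda>x y. B (grp n p x) (grp n p y)) x y \<noteq> 0"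
    proof (intro bexI)
      have "ptrans \<kappa>' (\<lambda>x y. B (grp n p x) (grp n p y)) (ungroup n p X) (ungroup n p Y)
          = ptrans \<kappa> B (grp n p (ungroup n p X)) (grp n p (ungroup n p Y))"
        by (rule pt) (use ungroup_idx[OF assms(1,2)] XY in blast)+
      also have "\<dots> = ptrans \<kappa> B X Y" using grp_ungroup[OF assms(1)] XY by simp
      finally show "ptrans \<kappa>' (\<lambda>x y. B (grp n p x) (grp n p y)) (ungroup n p X) (ungroup n p Y) \<noteq> 0"
        using XY by simp
    qed (use ungroup_idx[OF assms(1,2)] XY in blast)+
    show "\<exists>u v. \<forall>x\<in>idx n (p * q). \<forall>y\<in>idx n (p * q). ptrans \<kappa>' (\<lambda>x y. B (grp n p x) (grp n p y)) x y = u x * v y"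
      apply (rule exI[of _ "\<lambda>x. u (grp n p x)"])
      apply (rule exI[of _ "\<lambda>y. v (grp n p y)"])
    proof (intro ballI)
      fix x y assume xy: "x \<in> idx n (p * q)" "y \<in> idx n (p * q)"
      have g: "grp n p x \<in> idx (n ^ p) q" "grp n p y \<in> idx (n ^ p) q"
        using grp_idx[OF assms(1)] xy by blast+
      show "ptrans \<kappa>' (\<lambda>x y. B (grp n p x) (grp n p y)) x y = u (grp n p x) * v (grp n p y)"
        using pt[OF xy] uv g by simp
    qed
  qed
  then show ?thesis using k' unfolding pt_basic_def by blast
qed

theorem lemma3p11:
  fixes M :: "('a::field) pmat" and n p q :: nat
  assumes "n \<ge> 1" and "p \<ge> 1" and "q \<ge> 1"
  shows "pt_rank n (p * q) M \<le> pt_rank (n ^ p) q (regroup n p M)"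
proof -
  let ?P = "\<lambda>r::nat. \<exists>B. (\<forall>i<r. pt_basic (n ^ p) q (B i)) \<and>
      (\<forall>x\<in>idx (n ^ p) q. \<forall>y\<in>idx (n ^ p) q. regroup n p M x y = (\<Sum>i<r. B i x y))"
  let ?Q = "\<lambda>r::nat. \<exists>B. (\<forall>i<r. pt_basic n (p * q) (B i)) \<and>
      (\<forall>x\<in>idx n (p * q). \<forall>y\<in>idx n (p * q). M x y = (\<Sum>i<r. B i x y))"
  have ex: "\<exists>r. ?P r" by (rule decomp_exists)
  define r0 where "r0 = (LEAST r. ?P r)"
  have "?P r0" unfolding r0_def by (rule LeastI_ex[OF ex])
  then obtain B where B: "\<forall>i<r0. pt_basic (n ^ p) q (B i)"
    "\<forall>x\<in>idx (n ^ p) q. \<forall>y\<in>idx (n ^ p) q. regroup n p M x y = (\<Sum>i<r0. B i x y)"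
    by blast
  have "?Q r0"
  proof (rule exI[of _ "\<lambda>i x y. B i (grp n p x) (grp n p y)"], intro conjI ballI allI impI)
    fix i assume "i < r0"
    then show "pt_basic n (p * q) (\<lambda>x y. B i (grp n p x) (grp n p y))"
      using basic_transfer[OF assms(2,1)] B(1) by blast
  next
    fix x y assume xy: "x \<in> idx n (p * q)" "y \<in> idx n (p * q)"
    have "M x y = regroup n p M (grp n p x) (grp n p y)"
      unfolding regroup_def using ungroup_grp[OF assms(2) xy(1)] ungroup_grp[OF assms(2) xy(2)] by simp
    also have "\<dots> = (\<Sum>i<r0. B i (grp n p x) (grp n p y))"
      using B(2) grp_idx[OF assms(2) xy(1)] grp_idx[OF assms(2) xy(2)] by blast
    finally show "M x y = (\<Sum>i<r0. B i (grp n p x) (grp n p y))" .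
  qed
  then have "pt_rank n (p * q) M \<le> r0" unfolding pt_rank_def by (rule Least_le)
  then show ?thesis unfolding r0_def pt_rank_def .
qed

end
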